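(* Let $\Gamma_0>0$. There exist $h_0>0$, $C_0>0$ and $\eta_0>0$ such that for all $h\in(0,h_0)$ and every eigenpair $(\lambda,\psi)$ of $\mathcal H_{\mathsf{BO},\mathsf{Tri}}(h)$ with $|\lambda-\frac18|\le\Gamma_0h^{2/3}$, $$\int_{-\pi\sqrt2}^0e^{\eta_0h^{-1}|x|^{3/2}}\big(|\psi|^2+|h^{2/3}\partial_x\psi|^2\big)\,dx\le C_0\|\psi\|^2.$$
   Context: For $h>0$, $\mathcal H_{\mathsf{BO},\mathsf{Tri}}(h)=-h^2\partial_x^2+\frac{\pi^2}{4(x+\pi\sqrt2)^2}$ is the Dirichlet realization on $L^2((-\pi\sqrt2,0))$; $\|\cdot\|$ is the $L^2((-\pi\sqrt2,0))$ norm. *)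

theory Defs
  imports "HOL-Analysis.Analysis"
begin

definition tri_a :: real where
  "tri_a = - pi * sqrt 2"

definition tri_V :: "real \<Rightarrow> real" where
  "tri_V x = pi^2 / (4 * (x + pi * sqrt 2)^2)"

definition dx :: "(real \<Rightarrow> complex) \<Rightarrow> real \<Rightarrow> complex" where
  "dx f x = vector_derivative f (at x)"

text \<open>(lam, psi) is an eigenpair of the Dirichlet realization of
  -h^2 d^2/dx^2 + tri_V on L^2((tri_a, 0)): psi is a nonzero function in
  H^1_0 (continuous on the closed interval, vanishing at both endpoints,
  square-integrable derivative), twice differentiable inside and solving
  the eigenvalue equation there.\<close>
definition tri_eigenpair :: "real \<Rightarrow> real \<Rightarrow> (real \<Rightarrow> complex) \<Rightarrow> bool" where
  "tri_eigenpair h lam psi \<longleftrightarrow>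
     continuous_on {tri_a..0} psi \<and> psi tri_a = 0 \<and> psi 0 = 0 \<and>
     (\<forall>x\<in>{tri_a<..<0}. psi differentiable (at x) \<and> dx psi differentiable (at x) \<and>
        - (complex_of_real (h^2)) * dx (dx psi) x + complex_of_real (tri_V x) * psi x
          = complex_of_real lam * psi x) \<and>
     set_integrable lborel {tri_a<..<0} (\<lambda>x. (cmod (dx psi x))^2) \<and>
     (\<exists>x\<in>{tri_a<..<0}. psi x \<noteq> 0)"

end

theory Submission
  imports Defs
begin


definition cV :: real where "cV = pi^2 / (4 * (pi * sqrt 2)^3)"

lemma cV_pos: "cV > 0" unfolding cV_def by simp

lemma tri_a_neg: "tri_a < 0" unfolding tri_a_def by simp

lemma V_lower:
  assumes "tri_a < x" "x < 0"
  shows "tri_V x - 1/8 \<ge> cV * (-x)"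
proof -
  define s where "s = pi * sqrt 2"
  define y where "y = x + s"
  have s0: "s > 0" unfolding s_def by simp
  have y0: "0 < y" and ys: "y < s" using assms unfolding y_def s_def tri_a_def by auto
  have ss: "s^2 = 2*pi^2" unfolding s_def by (simp add: power_mult_distrib)
  have V: "tri_V x = pi^2/(4*y^2)" unfolding tri_V_def y_def s_def by simp
  have e8: "(1::real)/8 = pi^2/(4*(s^2))" using ss by simp
  have "tri_V x - 1/8 = pi^2*((s-y)*(s+y))/(4*y^2* s^2)"
    unfolding V e8 using y0 s0 by (simp add: field_simps power2_eq_square)
  also have "\<dots> \<ge> pi^2*((s-y)* s)/(4* s^2* s^2)"
  proof (rule frac_le)
    show "0 \<le> pi^2*((s-y)*(s+y))" using ys y0 by simp
    show "pi^2*((s-y)* s) \<le> pi^2*((s-y)*(s+y))" using ys y0 by (intro mult_left_mono) auto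
    show "0 < 4*y^2* s^2" using y0 s0 by simp
    show "4*y^2* s^2 \<le> 4* s^2* s^2" using y0 ys s0 by (intro mult_right_mono mult_left_mono power_mono) auto
  qed
  also have "pi^2*((s-y)* s)/(4* s^2* s^2) = cV*(-x)"
    unfolding cV_def s_def[symmetric] y_def using s0 by (simp add: field_simps power2_eq_square power3_eq_cube)
  finally show ?thesis .
qed

lemma eig_facts:
  assumes ep: "tri_eigenpair h lam psi" and x: "tri_a < x" "x < 0"
  shows "(psi has_vector_derivative dx psi x) (at x)"
    "(dx psi has_vector_derivative dx (dx psi) x) (at x)"
    "complex_of_real (h^2) * dx (dx psi) x = complex_of_real (tri_V x - lam) * psi x"
proof -
  have x': "x \<in> {tri_a<..<0}" using x by auto
  have d1: "psi differentiable (at x)" and d2: "dx psi differentiable (at x)"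
    and eq: "- (complex_of_real (h^2)) * dx (dx psi) x + complex_of_real (tri_V x) * psi x
          = complex_of_real lam * psi x"
    using ep x' unfolding tri_eigenpair_def by blast+
  show "(psi has_vector_derivative dx psi x) (at x)"
    using d1 unfolding dx_def by (simp add: vector_derivative_works)
  show "(dx psi has_vector_derivative dx (dx psi) x) (at x)"
    using d2 by (simp add: dx_def[of "dx psi"] vector_derivative_works)
  show "complex_of_real (h^2) * dx (dx psi) x = complex_of_real (tri_V x - lam) * psi x"
    using eq by (simp add: of_real_diff algebra_simps)
qed

lemma f_deriv:
  assumes "(psi has_vector_derivative d) (at x)"
  shows "((\<lambda>x. Re (psi x * cnj (psi x))) has_real_derivative 2 * Re (d * cnj (psi x))) (at x)"
proof -
  have "((\<lambda>x. psi x * cnj (psi x)) has_vector_derivative (psi x * cnj d + d * cnj (psi x))) (at x)"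
    by (intro has_vector_derivative_mult has_vector_derivative_cnj assms)
  then have "((\<lambda>x. Re (psi x * cnj (psi x))) has_real_derivative Re (psi x * cnj d + d * cnj (psi x))) (at x)"
    by (rule has_field_derivative_Re)
  moreover have "Re (psi x * cnj d + d * cnj (psi x)) = 2 * Re (d * cnj (psi x))"
    by (simp add: algebra_simps)
  ultimately show ?thesis by simp
qed

lemma Re_mult_cnj_nonneg: "Re (z * cnj z) \<ge> 0"
  by (simp add: complex_mult_cnj)

lemma left_point:
  assumes ep: "tri_eigenpair h lam psi" and s: "tri_a < s" "s < 0"
  shows "\<exists>\<alpha>. tri_a < \<alpha> \<and> \<alpha> < s \<and> Re (dx psi \<alpha> * cnj (psi \<alpha>)) \<ge> 0"
proof -
  define f where "f x = Re (psi x * cnj (psi x))" for x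
  have cont: "continuous_on {tri_a..0} psi" and pa: "psi tri_a = 0"
    using ep unfolding tri_eigenpair_def by auto
  have "continuous_on {tri_a..s} psi" by (rule continuous_on_subset[OF cont]) (use s in auto)
  then have cf: "continuous_on {tri_a..s} f" unfolding f_def by (intro continuous_intros)
  have df: "DERIV f z :> 2 * Re (dx psi z * cnj (psi z))" if "tri_a < z" "z < s" for z
    unfolding f_def using eig_facts(1)[OF ep] that s by (intro f_deriv) auto
  obtain l z where z: "tri_a < z" "z < s" and dz: "DERIV f z :> l" and fl: "f s - f tri_a = (s - tri_a) * l"
    using MVT[OF s(1) cf] df real_differentiable_def by blast
  have "f tri_a = 0" using pa unfolding f_def by simp
  moreover have "f s \<ge> 0" unfolding f_def by (rule Re_mult_cnj_nonneg)
  ultimately have "l \<ge> 0" using fl s by (simp add: zero_le_mult_iff)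
  moreover have "l = 2 * Re (dx psi z * cnj (psi z))" using DERIV_unique[OF dz df[OF z]] .
  ultimately show ?thesis using z by auto
qed

lemma right_point:
  assumes ep: "tri_eigenpair h lam psi" and s: "tri_a < s" "s < 0"
  shows "\<exists>\<beta>. s < \<beta> \<and> \<beta> < 0 \<and> Re (dx psi \<beta> * cnj (psi \<beta>)) \<le> 0"
proof -
  define f where "f x = Re (psi x * cnj (psi x))" for x
  have cont: "continuous_on {tri_a..0} psi" and pa: "psi 0 = 0"
    using ep unfolding tri_eigenpair_def by auto
  have "continuous_on {s..0} psi" by (rule continuous_on_subset[OF cont]) (use s in auto)
  then have cf: "continuous_on {s..0} f" unfolding f_def by (intro continuous_intros)
  have df: "DERIV f z :> 2 * Re (dx psi z * cnj (psi z))" if "s < z" "z < 0" for z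
    unfolding f_def using eig_facts(1)[OF ep] that s by (intro f_deriv) auto
  obtain l z where z: "s < z" "z < 0" and dz: "DERIV f z :> l" and fl: "f 0 - f s = (0 - s) * l"
    using MVT[OF s(2) cf] df real_differentiable_def by blast
  have "f 0 = 0" using pa unfolding f_def by simp
  moreover have "f s \<ge> 0" unfolding f_def by (rule Re_mult_cnj_nonneg)
  ultimately have "s * l \<ge> 0" using fl by simp
  then have "l \<le> 0" using s by (simp add: zero_le_mult_iff)
  moreover have "l = 2 * Re (dx psi z * cnj (psi z))" using DERIV_unique[OF dz df[OF z]] .
  ultimately show ?thesis using z by auto
qed

lemma pointwise_alg:
  fixes E U W r phi h hp g B Vl q D m n P :: real
  assumes E: "E > 0" and U: "U = n^2" and W: "W = m^2" and mn: "m \<ge> 0" "n \<ge> 0"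
    and r: "\<bar>r\<bar> \<le> m * n" and D: "D = E * (Vl * U + h^2 * W + h^2 * phi * r)"
    and q: "h^2 * phi^2 / 2 = q" and g: "g = Vl - q"
    and key: "hp * E * U \<le> g * E * U + B * hp * U"
    and hp3: "hp^3 = h^2" and hp: "hp > 0"
    and P: "P = E * (U + hp^2 * W)"
  shows "hp / 2 * P \<le> D + B * hp * U"
proof -
  have a: "2 * (\<bar>phi\<bar> * m * n) \<le> m^2 + phi^2 * n^2"
    using sum_squares_ge_zero[of "m - \<bar>phi\<bar> * n" 0]
    by (simp add: power2_eq_square algebra_simps)
  have b: "\<bar>phi * r\<bar> \<le> \<bar>phi\<bar> * m * n"
    using r by (simp add: abs_mult mult.assoc mult_left_mono)
  have c: "h^2 * phi * r \<ge> - (h^2 / 2) * (W + phi^2 * U)"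
  proof -
    have "- (phi * r) \<le> (W + phi^2 * U) / 2" using a b abs_ge_minus_self[of "phi * r"] unfolding U W by argo
    then have "h^2 * (- (phi * r)) \<le> h^2 * ((W + phi^2 * U) / 2)"
      by (intro mult_left_mono) auto
    then show ?thesis by (simp add: field_simps)
  qed
  have d: "D \<ge> E * (h^2 / 2 * W + g * U)"
  proof -
    have c': "h^2 * phi * r \<ge> - (h^2 / 2) * W - q * U"
    proof -
      have "(h^2 / 2) * (W + phi^2 * U) = (h^2 / 2) * W + q * U"
        unfolding q[symmetric] by (simp add: algebra_simps)
      then show ?thesis using c by linarith
    qed
    have gU: "g * U = Vl * U - q * U" unfolding g by (simp add: algebra_simps)
    have "Vl * U + h^2 * W + h^2 * phi * r \<ge> h^2 / 2 * W + g * U"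
      using c' gU by linarith
    then show ?thesis unfolding D using E by (intro mult_left_mono) auto
  qed
  have e: "hp / 2 * P \<le> E * (h^2 / 2 * W) + hp * E * U"
  proof -
    have "hp / 2 * P = E * (hp^3 / 2 * W) + hp / 2 * E * U"
      unfolding P by (simp add: algebra_simps power3_eq_cube power2_eq_square)
    also have "\<dots> \<le> E * (h^2 / 2 * W) + hp * E * U"
      using hp3 hp E U by (simp add: mult_right_mono)
    finally show ?thesis .
  qed
  show ?thesis using d e key by (simp add: algebra_simps)
qed

lemma key_alg:
  fixes E U g hp B R Gam c y M :: real
  assumes E: "E > 0" and U: "U \<ge> 0" and hp: "hp > 0" and Gam: "Gam > 0" and c: "c > 0"
    and y: "y \<ge> 0" and g: "g \<ge> c / 2 * y - Gam * hp" and R: "R = 2 * (Gam + 1) / c"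
    and B: "B = (1 + Gam) * M" and M: "M > 0" and EM: "y < R * hp \<Longrightarrow> E \<le> M"
  shows "hp * E * U \<le> g * E * U + B * hp * U"
proof (cases "y < R * hp")
  case True
  have "g * E * U \<ge> (- Gam * hp) * E * U"
  proof -
    have "g \<ge> - Gam * hp" proof -
      have "c / 2 * y \<ge> 0" using c y by simp
      then show ?thesis using g by linarith
    qed
    then show ?thesis using E U by (intro mult_right_mono) auto
  qed
  moreover have "(1 + Gam) * (hp * U * E) \<le> (1 + Gam) * (hp * U * M)"
    using EM[OF True] hp U Gam by (intro mult_left_mono) auto
  ultimately show ?thesis unfolding B by (simp add: algebra_simps)
next
  case False
  have "c / 2 * y \<ge> c / 2 * (R * hp)" using False c by (intro mult_left_mono) auto
  also have "c / 2 * (R * hp) = (Gam + 1) * hp" unfolding R using c by simp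
  finally have "g \<ge> hp" using g by (simp add: algebra_simps)
  then have "hp * E * U \<le> g * E * U" using E U by (intro mult_right_mono) auto
  moreover have "B * hp * U \<ge> 0" unfolding B using Gam M hp U by simp
  ultimately show ?thesis by simp
qed

lemma E_bound:
  fixes h y R eta :: real
  assumes h: "h > 0" and y: "y \<ge> 0" "y < R * h powr (2/3)" and eta: "eta > 0"
  shows "exp (eta / h * y powr (3/2)) \<le> exp (eta * R powr (3/2))"
proof -
  have R: "R > 0" proof (rule ccontr)
    assume "\<not> R > 0"
    moreover have "h powr (2/3) > 0" using h by simp
    ultimately have "R * h powr (2/3) \<le> 0" by (simp add: mult_nonpos_nonneg)
    then show False using y by linarith
  qed
  have "y powr (3/2) \<le> (R * h powr (2/3)) powr (3/2)"
    using y by (intro powr_mono2) auto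
  also have "\<dots> = R powr (3/2) * h"
    using R h by (simp add: powr_mult powr_powr)
  finally have "eta / h * y powr (3/2) \<le> eta / h * (R powr (3/2) * h)"
    using eta h by (intro mult_left_mono) auto
  also have "\<dots> = eta * R powr (3/2)" using h by simp
  finally show ?thesis by simp
qed

lemma g_bound:
  assumes x: "tri_a < x" "x < 0" and lamb: "\<bar>lam - 1/8\<bar> \<le> G0 * hp"
    and eta: "eta^2 \<le> cV / 3"
  shows "tri_V x - lam - 9/8 * eta^2 * (-x) \<ge> cV / 2 * (-x) - G0 * hp"
proof -
  have "tri_V x - 1/8 \<ge> cV * (-x)" using V_lower x by blast
  moreover have "9/8 * eta^2 * (-x) \<le> 9/8 * (cV/3) * (-x)"
    using eta x by (intro mult_right_mono) auto
  moreover have "lam - 1/8 \<le> G0 * hp" using lamb by linarith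
  moreover have "9/8 * (cV/3) * (-x) = 3/8 * (cV * (-x))" by simp
  moreover have "cV / 2 * (-x) = 1/2 * (cV * (-x))" by simp
  moreover have "cV * (-x) \<ge> 0" using cV_pos x by (simp add: mult_pos_neg less_imp_le)
  ultimately show ?thesis by linarith
qed

lemma cont_facts:
  assumes ep: "tri_eigenpair h lam psi" and ab: "tri_a < \<alpha>" "\<beta> < 0"
  shows "continuous_on {\<alpha>..\<beta>} (\<lambda>x. exp (eta / h * \<bar>x\<bar> powr (3/2)) *
         ((cmod (psi x))^2 + (cmod (complex_of_real (h powr (2/3)) * dx psi x))^2))"
    "continuous_on {\<alpha>..\<beta>} (\<lambda>x. (cmod (psi x))^2)"
proof -
  have c1: "isCont psi x" and c2: "isCont (dx psi) x" if "x \<in> {\<alpha>..\<beta>}" for x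
    using eig_facts(1,2)[OF ep, of x] that ab has_vector_derivative_continuous by auto
  show "continuous_on {\<alpha>..\<beta>} (\<lambda>x. exp (eta / h * \<bar>x\<bar> powr (3/2)) *
         ((cmod (psi x))^2 + (cmod (complex_of_real (h powr (2/3)) * dx psi x))^2))"
    using ab c1 c2 by (intro continuous_at_imp_continuous_on ballI continuous_intros) auto
  show "continuous_on {\<alpha>..\<beta>} (\<lambda>x. (cmod (psi x))^2)"
    using ab c1 by (intro continuous_at_imp_continuous_on ballI continuous_intros) auto
qed


definition Bc :: "real \<Rightarrow> real \<Rightarrow> real" where
  "Bc G0 eta = (1 + G0) * exp (eta * (2 * (G0 + 1) / cV) powr (3/2))"

lemma core:
  fixes h lam G0 eta \<alpha> \<beta> :: real and psi :: "real \<Rightarrow> complex"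
  assumes ep: "tri_eigenpair h lam psi" and h: "h > 0" and G0: "G0 > 0"
    and lamb: "\<bar>lam - 1/8\<bar> \<le> G0 * h powr (2/3)"
    and eta: "eta > 0" "eta^2 \<le> cV / 3"
    and ab: "tri_a < \<alpha>" "\<alpha> \<le> \<beta>" "\<beta> < 0"
    and sa: "Re (dx psi \<alpha> * cnj (psi \<alpha>)) \<ge> 0" and sb: "Re (dx psi \<beta> * cnj (psi \<beta>)) \<le> 0"
  shows "integral {\<alpha>..\<beta>} (\<lambda>x. exp (eta / h * \<bar>x\<bar> powr (3/2)) *
         ((cmod (psi x))^2 + (cmod (complex_of_real (h powr (2/3)) * dx psi x))^2))
      \<le> 2 * Bc G0 eta * integral {\<alpha>..\<beta>} (\<lambda>x. (cmod (psi x))^2)"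
proof -
  define hp where "hp = h powr (2/3)"
  define E where "E x = exp (eta / h * (-x) powr (3/2))" for x
  define phi where "phi x = - (3/2) * (eta / h) * (-x) powr (1/2)" for x
  define U where "U x = (cmod (psi x))^2" for x
  define W where "W x = (cmod (dx psi x))^2" for x
  define r where "r x = Re (dx psi x * cnj (psi x))" for x
  define G where "G x = h^2 * (r x * E x)" for x
  define D where "D x = E x * ((tri_V x - lam) * U x + h^2 * W x + h^2 * phi x * r x)" for x
  define P where "P x = exp (eta / h * \<bar>x\<bar> powr (3/2)) *
         ((cmod (psi x))^2 + (cmod (complex_of_real (h powr (2/3)) * dx psi x))^2)" for x
  define B where "B = Bc G0 eta"
  define R where "R = 2 * (G0 + 1) / cV"
  have hp: "hp > 0" unfolding hp_def using h by simp
  have hp3: "hp^3 = h^2"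
  proof -
    have "hp^3 = h powr (2/3 + 2/3 + 2/3)" unfolding hp_def by (simp only: power3_eq_cube powr_add)
    also have "\<dots> = h powr 2" by simp
    also have "\<dots> = h^2" using h by simp
    finally show ?thesis .
  qed
  have inI: "tri_a < x \<and> x < 0" if "x \<in> {\<alpha>..\<beta>}" for x using that ab by auto
  have dE: "(E has_real_derivative phi x * E x) (at x)" if x: "x < 0" for x
  proof -
    have d1: "((\<lambda>x. (-x) powr (3/2)) has_real_derivative (3/2) * (-x) powr (3/2 - of_nat 1) * (-1)) (at x)"
      by (rule DERIV_fun_powr) (use x DERIV_minus[OF DERIV_ident, of x UNIV] in auto)
    have der: "((\<lambda>x. exp (eta / h * (-x) powr (3/2))) has_real_derivative
        exp (eta / h * (-x) powr (3/2)) * (eta / h * ((3/2) * (-x) powr (3/2 - of_nat 1) * (-1)))) (at x)"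
      by (intro DERIV_fun_exp DERIV_cmult d1)
    have e: "(3/2::real) - of_nat 1 = 1/2" by simp
    have eq: "exp (eta / h * (-x) powr (3/2)) * (eta / h * ((3/2) * (-x) powr (3/2 - of_nat 1) * (-1)))
        = phi x * E x"
      unfolding phi_def E_def e by (simp add: mult_ac)
    have Eeq: "(\<lambda>x. exp (eta / h * (-x) powr (3/2))) = E" by (rule ext) (simp add: E_def)
    show ?thesis using der unfolding Eeq eq .
  qed
  have phi2: "h^2 * (phi x)^2 / 2 = 9/8 * eta^2 * (-x)" if x: "x < 0" for x
  proof -
    have "((-x) powr (1/2))^2 = -x" using x by (simp add: powr_half_sqrt)
    note sq = this
    have gen: "(- (3/2) * (eta / h) * y)^2 = 9/4 * (eta/h)^2 * y^2" for y :: real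
      by (simp add: power2_eq_square)
    have p: "(phi x)^2 = 9/4 * (eta/h)^2 * (-x)" unfolding phi_def gen sq ..
    have hh: "h^2 * (eta/h)^2 = eta^2" using h by (simp add: power_divide)
    have "h^2 * (phi x)^2 / 2 = 9/8 * (h^2 * (eta/h)^2) * (-x)" unfolding p by (simp add: algebra_simps)
    then show ?thesis unfolding hh .
  qed
  have dG: "(G has_real_derivative D x) (at x)" if x: "tri_a < x" "x < 0" for x
  proof -
    have dpsi: "(psi has_vector_derivative dx psi x) (at x)"
      and ddpsi: "(dx psi has_vector_derivative dx (dx psi) x) (at x)"
      and ode: "complex_of_real (h^2) * dx (dx psi) x = complex_of_real (tri_V x - lam) * psi x"
      using eig_facts[OF ep x] by auto
    have "((\<lambda>x. dx psi x * cnj (psi x)) has_vector_derivative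
        (dx psi x * cnj (dx psi x) + dx (dx psi) x * cnj (psi x))) (at x)"
      by (intro has_vector_derivative_mult has_vector_derivative_cnj dpsi ddpsi)
    then have dr: "(r has_real_derivative Re (dx psi x * cnj (dx psi x) + dx (dx psi) x * cnj (psi x))) (at x)"
      unfolding r_def by (rule has_field_derivative_Re)
    have "(G has_real_derivative h^2 * (Re (dx psi x * cnj (dx psi x) + dx (dx psi) x * cnj (psi x)) * E x
          + (phi x * E x) * r x)) (at x)"
      unfolding G_def by (intro DERIV_cmult DERIV_mult dr dE x)
    moreover have "Re (dx psi x * cnj (dx psi x)) = W x"
      unfolding W_def by (simp add: complex_mult_cnj cmod_power2)
    moreover have "h^2 * Re (dx (dx psi) x * cnj (psi x)) = (tri_V x - lam) * U x"
    proof -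
      have "h^2 * Re (dx (dx psi) x * cnj (psi x)) = Re (complex_of_real (h^2) * dx (dx psi) x * cnj (psi x))"
        by (simp add: algebra_simps)
      also have "\<dots> = Re (complex_of_real (tri_V x - lam) * (psi x * cnj (psi x)))"
        using ode by (simp add: mult.assoc)
      also have "\<dots> = (tri_V x - lam) * U x"
        unfolding U_def by (simp add: complex_mult_cnj cmod_power2)
      finally show ?thesis .
    qed
    ultimately have "(G has_real_derivative h^2 * ((W x + Re (dx (dx psi) x * cnj (psi x))) * E x
          + (phi x * E x) * r x)) (at x)" by simp
    moreover have "h^2 * ((W x + Re (dx (dx psi) x * cnj (psi x))) * E x + (phi x * E x) * r x)
       = E x * (h^2 * Re (dx (dx psi) x * cnj (psi x)) + h^2 * W x + h^2 * phi x * r x)"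
      by (simp add: algebra_simps)
    ultimately show ?thesis unfolding D_def \<open>h^2 * Re (dx (dx psi) x * cnj (psi x)) = (tri_V x - lam) * U x\<close> by simp
  qed
  have ftc: "(D has_integral (G \<beta> - G \<alpha>)) {\<alpha>..\<beta>}"
  proof (rule fundamental_theorem_of_calculus[OF ab(2)])
    fix x assume "x \<in> {\<alpha>..\<beta>}"
    then have "(G has_real_derivative D x) (at x)" using dG inI by blast
    then show "(G has_vector_derivative D x) (at x within {\<alpha>..\<beta>})"
      by (simp add: has_real_derivative_iff_has_vector_derivative has_vector_derivative_at_within)
  qed
  have Ga: "G \<alpha> \<ge> 0" unfolding G_def r_def E_def using sa by simp
  have Gb: "G \<beta> \<le> 0" unfolding G_def using sb by (intro mult_nonneg_nonpos mult_nonpos_nonneg) (auto simp: r_def E_def)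
  have pw: "hp / 2 * P x \<le> D x + B * hp * U x" if xI: "x \<in> {\<alpha>..\<beta>}" for x
  proof -
    have x: "tri_a < x" "x < 0" using inI[OF xI] by auto
    have keyx: "hp * E x * U x \<le> (tri_V x - lam - 9/8 * eta^2 * (-x)) * E x * U x + B * hp * U x"
    proof (rule key_alg[where c = cV and Gam = G0 and y = "-x" and R = R and M = "exp (eta * R powr (3/2))"])
      show "E x > 0" unfolding E_def by simp
      show "U x \<ge> 0" unfolding U_def by simp
      show "tri_V x - lam - 9/8 * eta^2 * (-x) \<ge> cV / 2 * (-x) - G0 * hp"
        using g_bound[OF x _ eta(2)] lamb unfolding hp_def by blast
      show "B = (1 + G0) * exp (eta * R powr (3/2))" unfolding B_def Bc_def R_def by simp
      show "- x < R * hp \<Longrightarrow> E x \<le> exp (eta * R powr (3/2))"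
        unfolding E_def hp_def using E_bound[OF h _ _ eta(1)] x by auto
    qed (use hp G0 cV_pos x R_def in auto)
    show ?thesis
    proof (rule pointwise_alg[where E = "E x" and m = "cmod (dx psi x)" and n = "cmod (psi x)"
          and r = "r x" and phi = "phi x" and h = h and Vl = "tri_V x - lam"
          and q = "9/8 * eta^2 * (-x)" and g = "tri_V x - lam - 9/8 * eta^2 * (-x)"])
      show "E x > 0" unfolding E_def by simp
      show "\<bar>r x\<bar> \<le> cmod (dx psi x) * cmod (psi x)"
        unfolding r_def using abs_Re_le_cmod[of "dx psi x * cnj (psi x)"] by (simp add: norm_mult)
      show "P x = E x * (U x + hp^2 * W x)"
      proof -
        have a1: "\<bar>x\<bar> = -x" using x by simp
        have a2: "cmod (complex_of_real (h powr (2/3)) * dx psi x) = hp * cmod (dx psi x)"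
          unfolding hp_def[symmetric] using hp by (simp add: norm_mult)
        show ?thesis unfolding P_def E_def U_def W_def a1 a2 by (simp add: power_mult_distrib)
      qed
    qed (rule keyx | simp add: hp3 hp phi2[OF x(2)] U_def W_def D_def)+
  qed
  have intP: "P integrable_on {\<alpha>..\<beta>}"
    unfolding P_def using cont_facts(1)[OF ep ab(1) ab(3)] by (rule integrable_continuous_interval)
  have intU: "U integrable_on {\<alpha>..\<beta>}"
    unfolding U_def using cont_facts(2)[OF ep ab(1) ab(3)] by (rule integrable_continuous_interval)
  have "hp / 2 * integral {\<alpha>..\<beta>} P = integral {\<alpha>..\<beta>} (\<lambda>x. hp / 2 * P x)"
    by simp
  also have "\<dots> \<le> integral {\<alpha>..\<beta>} (\<lambda>x. D x + B * hp * U x)"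
  proof (rule integral_le)
    show "(\<lambda>x. hp / 2 * P x) integrable_on {\<alpha>..\<beta>}"
      using integrable_cmul[OF intP, of "hp / 2"] by simp
    show "(\<lambda>x. D x + B * hp * U x) integrable_on {\<alpha>..\<beta>}"
      using integrable_add[OF has_integral_integrable[OF ftc] integrable_cmul[OF intU, of "B * hp"]] by simp
  qed (use pw in auto)
  also have "\<dots> = (G \<beta> - G \<alpha>) + B * hp * integral {\<alpha>..\<beta>} U"
  proof (rule integral_unique)
    show "((\<lambda>x. D x + B * hp * U x) has_integral (G \<beta> - G \<alpha> + B * hp * integral {\<alpha>..\<beta>} U)) {\<alpha>..\<beta>}"
      using has_integral_add[OF ftc has_integral_cmul[OF integrable_integral[OF intU], of "B * hp"]] by simp
  qed
  also have "\<dots> \<le> B * hp * integral {\<alpha>..\<beta>} U" using Ga Gb by simp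
  finally have "hp / 2 * integral {\<alpha>..\<beta>} P \<le> hp / 2 * (2 * B * integral {\<alpha>..\<beta>} U)"
    by (simp add: algebra_simps)
  then have "integral {\<alpha>..\<beta>} P \<le> 2 * B * integral {\<alpha>..\<beta>} U"
    using hp by simp
  then show ?thesis unfolding P_def U_def B_def .
qed

lemma interval_nn:
  fixes h lam G0 eta s t :: real and psi :: "real \<Rightarrow> complex"
  assumes ep: "tri_eigenpair h lam psi" and h: "h > 0" and G0: "G0 > 0"
    and lamb: "\<bar>lam - 1/8\<bar> \<le> G0 * h powr (2/3)"
    and eta: "eta > 0" "eta^2 \<le> cV / 3"
    and st: "tri_a < s" "t < 0"
  shows "(\<integral>\<^sup>+ x \<in> {s..t}. ennreal (exp (eta / h * \<bar>x\<bar> powr (3/2)) *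
         ((cmod (psi x))^2 + (cmod (complex_of_real (h powr (2/3)) * dx psi x))^2)) \<partial>lborel)
     \<le> ennreal (2 * Bc G0 eta) * (\<integral>\<^sup>+ x \<in> {tri_a<..<0}. ennreal ((cmod (psi x))^2) \<partial>lborel)"
proof (cases "s \<le> t")
  case False
  then have "{s..t} = {}" by auto
  then show ?thesis by simp
next
  case True
  define P where "P x = exp (eta / h * \<bar>x\<bar> powr (3/2)) *
         ((cmod (psi x))^2 + (cmod (complex_of_real (h powr (2/3)) * dx psi x))^2)" for x
  define U where "U x = (cmod (psi x))^2" for x
  obtain \<alpha> where a: "tri_a < \<alpha>" "\<alpha> < s" "Re (dx psi \<alpha> * cnj (psi \<alpha>)) \<ge> 0"
    using left_point[OF ep st(1)] True st by fastforce
  obtain \<beta> where b: "t < \<beta>" "\<beta> < 0" "Re (dx psi \<beta> * cnj (psi \<beta>)) \<le> 0"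
    using right_point[OF ep, of t] True st by fastforce
  have ab: "\<alpha> \<le> \<beta>" using a b True by linarith
  have Pnn: "P x \<ge> 0" for x unfolding P_def by simp
  have Unn: "U x \<ge> 0" for x unfolding U_def by simp
  have iP: "(P has_integral integral {\<alpha>..\<beta>} P) {\<alpha>..\<beta>}"
    unfolding P_def using cont_facts(1)[OF ep a(1) b(2)]
    by (intro integrable_integral integrable_continuous_interval)
  have iU: "(U has_integral integral {\<alpha>..\<beta>} U) {\<alpha>..\<beta>}"
    unfolding U_def using cont_facts(2)[OF ep a(1) b(2)]
    by (intro integrable_integral integrable_continuous_interval)
  have B0: "Bc G0 eta \<ge> 0" unfolding Bc_def using G0 by simp
  have "(\<integral>\<^sup>+ x \<in> {s..t}. ennreal (P x) \<partial>lborel) \<le> (\<integral>\<^sup>+ x \<in> {\<alpha>..\<beta>}. ennreal (P x) \<partial>lborel)"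
    using a b by (intro nn_integral_mono) (auto split: split_indicator)
  also have "\<dots> = ennreal (integral {\<alpha>..\<beta>} P)"
    using nn_integral_has_integral_lebesgue'[OF _ iP] Pnn by simp
  also have "\<dots> \<le> ennreal (2 * Bc G0 eta * integral {\<alpha>..\<beta>} U)"
    unfolding P_def U_def using core[OF ep h G0 lamb eta a(1) ab b(2) a(3) b(3)]
    by (rule ennreal_leI)
  also have "\<dots> = ennreal (2 * Bc G0 eta) * ennreal (integral {\<alpha>..\<beta>} U)"
  proof -
    have "integral {\<alpha>..\<beta>} U \<ge> 0" using has_integral_nonneg[OF iU] Unn by auto
    then show ?thesis using B0 by (intro ennreal_mult) auto
  qed
  also have "ennreal (integral {\<alpha>..\<beta>} U) = (\<integral>\<^sup>+ x \<in> {\<alpha>..\<beta>}. ennreal (U x) \<partial>lborel)"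
    using nn_integral_has_integral_lebesgue'[OF _ iU] Unn by simp
  also have "(\<integral>\<^sup>+ x \<in> {\<alpha>..\<beta>}. ennreal (U x) \<partial>lborel) \<le> (\<integral>\<^sup>+ x \<in> {tri_a<..<0}. ennreal (U x) \<partial>lborel)"
    using a b by (intro nn_integral_mono) (auto split: split_indicator)
  finally show ?thesis unfolding P_def U_def by (simp add: mult_left_mono)
qed

lemma main_bound:
  fixes h lam G0 eta :: real and psi :: "real \<Rightarrow> complex"
  assumes ep: "tri_eigenpair h lam psi" and h: "h > 0" and G0: "G0 > 0"
    and lamb: "\<bar>lam - 1/8\<bar> \<le> G0 * h powr (2/3)"
    and eta: "eta > 0" "eta^2 \<le> cV / 3"
  shows "(\<integral>\<^sup>+ x \<in> {tri_a<..<0}. ennreal (exp (eta / h * \<bar>x\<bar> powr (3/2)) *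
         ((cmod (psi x))^2 + (cmod (complex_of_real (h powr (2/3)) * dx psi x))^2)) \<partial>lborel)
     \<le> ennreal (2 * Bc G0 eta) * (\<integral>\<^sup>+ x \<in> {tri_a<..<0}. ennreal ((cmod (psi x))^2) \<partial>lborel)"
proof -
  define P where "P x = exp (eta / h * \<bar>x\<bar> powr (3/2)) *
         ((cmod (psi x))^2 + (cmod (complex_of_real (h powr (2/3)) * dx psi x))^2)" for x
  define S where "S n = {tri_a + 1 / real (Suc n) .. - 1 / real (Suc n)}" for n
  define f where "f n x = ennreal (P x) * indicator (S n) x" for n x
  have Pnn: "P x \<ge> 0" for x unfolding P_def by simp
  have Ssub: "S n \<subseteq> S (Suc n)" for n
  proof -
    have "1 / real (Suc (Suc n)) \<le> 1 / real (Suc n)" by (intro divide_left_mono) auto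
    then show ?thesis unfolding S_def by auto
  qed
  have SI: "S n \<subseteq> {tri_a<..<0}" for n
  proof (rule subsetI)
    fix x assume "x \<in> S n"
    then have "tri_a + 1 / real (Suc n) \<le> x" "x \<le> - 1 / real (Suc n)" unfolding S_def by auto
    moreover have "0 < 1 / real (Suc n)" by simp
    ultimately show "x \<in> {tri_a<..<0}" by (simp only: greaterThanLessThan_iff) linarith
  qed
  have inc: "incseq f"
  proof (rule incseq_SucI, rule le_funI)
    fix n x
    show "f n x \<le> f (Suc n) x"
      unfolding f_def using Ssub[of n] by (auto split: split_indicator)
  qed
  have meas: "f n \<in> borel_measurable lborel" for n
  proof -
    have c: "continuous_on (S n) P"
      unfolding S_def P_def by (rule cont_facts(1)[OF ep]) (simp_all add: tri_a_def)
    have "(\<lambda>x. indicator (S n) x *\<^sub>R P x) \<in> borel_measurable borel"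
      by (rule borel_measurable_continuous_on_indicator[OF _ c]) (simp add: S_def)
    then have "(\<lambda>x. ennreal (indicator (S n) x *\<^sub>R P x)) \<in> borel_measurable borel"
      by measurable
    moreover have "(\<lambda>x. ennreal (indicator (S n) x *\<^sub>R P x)) = f n"
      unfolding f_def by (auto split: split_indicator)
    ultimately show ?thesis by simp
  qed
  have sup: "ennreal (P x) * indicator {tri_a<..<0} x = (SUP n. f n x)" for x
  proof (cases "x \<in> {tri_a<..<0}")
    case True
    then have "0 < min (x - tri_a) (- x)" by auto
    then obtain N where N: "1 / real (Suc N) < min (x - tri_a) (- x)" by (rule nat_approx_posE)
    then have xN: "x \<in> S N" unfolding S_def by auto
    show ?thesis
    proof (rule antisym)
      show "ennreal (P x) * indicator {tri_a<..<0} x \<le> (SUP n. f n x)"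
        using True xN by (intro SUP_upper2[of N]) (auto simp: f_def)
      show "(SUP n. f n x) \<le> ennreal (P x) * indicator {tri_a<..<0} x"
        using True by (intro SUP_least) (auto simp: f_def split: split_indicator)
    qed
  next
    case False
    then have "f n x = 0" for n unfolding f_def using SI[of n] by (auto split: split_indicator)
    then show ?thesis using False by simp
  qed
  have "(\<integral>\<^sup>+ x \<in> {tri_a<..<0}. ennreal (P x) \<partial>lborel) = (\<integral>\<^sup>+ x. (SUP n. f n x) \<partial>lborel)"
    using sup by simp
  also have "\<dots> = (SUP n. integral\<^sup>N lborel (f n))"
    by (rule nn_integral_monotone_convergence_SUP[OF inc meas])
  also have "\<dots> \<le> ennreal (2 * Bc G0 eta) * (\<integral>\<^sup>+ x \<in> {tri_a<..<0}. ennreal ((cmod (psi x))^2) \<partial>lborel)"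
  proof (rule SUP_least)
    fix n
    show "integral\<^sup>N lborel (f n) \<le> ennreal (2 * Bc G0 eta) * (\<integral>\<^sup>+ x \<in> {tri_a<..<0}. ennreal ((cmod (psi x))^2) \<partial>lborel)"
      unfolding f_def S_def P_def
      by (rule interval_nn[OF ep h G0 lamb eta]) (simp_all add: tri_a_def)
  qed
  finally show ?thesis unfolding P_def .
qed

theorem proposition4p3:
  fixes \<Gamma>0 :: real
  assumes "\<Gamma>0 > 0"
  shows "\<exists>h0>0. \<exists>C0>0. \<exists>\<eta>0>0. \<forall>h lam psi.
     0 < h \<and> h < h0 \<and> tri_eigenpair h lam psi \<and> \<bar>lam - 1/8\<bar> \<le> \<Gamma>0 * h powr (2/3) \<longrightarrow>
     (\<integral>\<^sup>+ x \<in> {tri_a<..<0}. ennreal (exp (\<eta>0 / h * \<bar>x\<bar> powr (3/2)) *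
         ((cmod (psi x))^2 + (cmod (complex_of_real (h powr (2/3)) * dx psi x))^2)) \<partial>lborel)
     \<le> ennreal C0 * (\<integral>\<^sup>+ x \<in> {tri_a<..<0}. ennreal ((cmod (psi x))^2) \<partial>lborel)"
proof -
  define eta where "eta = min 1 (cV / 3)"
  have eta0: "eta > 0" unfolding eta_def using cV_pos by simp
  have eta2: "eta^2 \<le> cV / 3"
  proof -
    have "eta \<le> 1" unfolding eta_def by simp
    then have "eta * eta \<le> eta * 1" using eta0 by (intro mult_left_mono) auto
    then have "eta^2 \<le> eta" by (simp add: power2_eq_square)
    also have "\<dots> \<le> cV / 3" unfolding eta_def by simp
    finally show ?thesis .
  qed
  have C0: "2 * Bc \<Gamma>0 eta > 0" unfolding Bc_def using assms by simp
  show ?thesis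
    apply (rule exI[of _ 1], rule conjI, simp)
    apply (rule exI[of _ "2 * Bc \<Gamma>0 eta"], rule conjI, rule C0)
    apply (rule exI[of _ eta], rule conjI, rule eta0)
    using main_bound[OF _ _ assms _ eta0 eta2] by blast
qed

end
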